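(* Consider $K$ arms, each a two-state irreducible Markov chain $M_i$ on $\{0,1\}$ with transition probabilities $p_{01}^i,p_{10}^i$ and stationary distribution $\pi_i=(\pi_i(0),\pi_i(1))$, rested (only the played arm changes state), with reward $r(s)=s$ when an arm in state $s$ is played. Let $\mu_i=\pi_i(1)$, assume arm 1 is optimal ($\mu_1=\max_j\mu_j$), and $\Delta_i=\mu_1-\mu_i$. Let $\alpha$ be a uniformly good policy. Then $\liminf_{n\to\infty}\frac{R_\alpha(n)}{\log n}\ge\sum_{i=2}^K\frac{\Delta_i}{I(M_i\|M_1)}$, where $I(M_i\|M_j)=\pi_i(0)D(p_{01}^i\|p_{01}^j)+\pi_i(1)D(p_{10}^i\|p_{10}^j)$.
   Context: $D(a\|b)=a\log\frac ab+(1-a)\log\frac{1-a}{1-b}$. A policy $\alpha$ chooses at each time $t$ an arm $\alpha(t)$ based on past choices and rewards; its regret is $R_\alpha(n)=n\mu_1-\mathbb E_\alpha\big[\sum_{t=1}^n r(s(\alpha(t)))\big]$, where $s(\alpha(t))$ is the state of the chosen arm at time $t$. The policy is uniformly good if, for every such bandit instance (every choice of irreducible two-state chains for the arms), $R_\alpha(n)=o(n^\beta)$ for every $\beta>0$. *)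

theory Defs
  imports "HOL-Probability.Probability" "HOL-Library.Landau_Symbols"
begin

text \<open>Arm i is a two-state chain on states False (=0) and True (=1)
  with transition probabilities p01 i (from 0 to 1) and p10 i (from 1 to 0).
  Irreducibility of a two-state chain means both transition probabilities are positive.\<close>

definition valid_instance :: "nat \<Rightarrow> (nat \<Rightarrow> real) \<Rightarrow> (nat \<Rightarrow> real) \<Rightarrow> bool" where
  "valid_instance K p01 p10 \<longleftrightarrow>
     (\<forall>i\<in>{1..K}. 0 < p01 i \<and> p01 i \<le> 1 \<and> 0 < p10 i \<and> p10 i \<le> 1)"

definition pi1 :: "(nat \<Rightarrow> real) \<Rightarrow> (nat \<Rightarrow> real) \<Rightarrow> nat \<Rightarrow> real" where
  "pi1 p01 p10 i = p01 i / (p01 i + p10 i)"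

definition pi0 :: "(nat \<Rightarrow> real) \<Rightarrow> (nat \<Rightarrow> real) \<Rightarrow> nat \<Rightarrow> real" where
  "pi0 p01 p10 i = p10 i / (p01 i + p10 i)"

definition mu :: "(nat \<Rightarrow> real) \<Rightarrow> (nat \<Rightarrow> real) \<Rightarrow> nat \<Rightarrow> real" where
  "mu p01 p10 i = pi1 p01 p10 i"

definition mu_star :: "nat \<Rightarrow> (nat \<Rightarrow> real) \<Rightarrow> (nat \<Rightarrow> real) \<Rightarrow> real" where
  "mu_star K p01 p10 = Max (mu p01 p10 ` {1..K})"

text \<open>Bernoulli KL divergence D(a||b), extended-real valued (value \<infinity> when absolute
  continuity fails), with the convention 0 log 0 = 0.\<close>
definition xlogxy :: "real \<Rightarrow> real \<Rightarrow> real" where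
  "xlogxy x y = (if x = 0 then 0 else x * ln (x / y))"

definition bern_kl :: "real \<Rightarrow> real \<Rightarrow> ereal" where
  "bern_kl a b =
     (if (b = 0 \<and> a \<noteq> 0) \<or> (b = 1 \<and> a \<noteq> 1) then \<infinity>
      else ereal (xlogxy a b + xlogxy (1 - a) (1 - b)))"

definition kl_rate :: "(nat \<Rightarrow> real) \<Rightarrow> (nat \<Rightarrow> real) \<Rightarrow> nat \<Rightarrow> nat \<Rightarrow> ereal" where
  "kl_rate p01 p10 i j =
     ereal (pi0 p01 p10 i) * bern_kl (p01 i) (p01 j) + ereal (pi1 p01 p10 i) * bern_kl (p10 i) (p10 j)"

text \<open>Histories: list of (chosen arm, observed state = reward) pairs, oldest first.
  A (possibly randomised) policy maps a history to a distribution over arms.\<close>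
type_synonym history = "(nat \<times> bool) list"
type_synonym policy = "history \<Rightarrow> nat pmf"

definition is_policy :: "nat \<Rightarrow> policy \<Rightarrow> bool" where
  "is_policy K pol \<longleftrightarrow> (\<forall>h. set_pmf (pol h) \<subseteq> {1..K})"

text \<open>Rested dynamics: the state of arm a when it is played is its initial state if it was never
  played before, otherwise it is obtained by one transition of chain a from the last observed
  state of arm a (arms not played do not change state).\<close>
definition next_state :: "(nat \<Rightarrow> real) \<Rightarrow> (nat \<Rightarrow> real) \<Rightarrow> (nat \<Rightarrow> bool) \<Rightarrow> history \<Rightarrow> nat \<Rightarrow> bool pmf" where
  "next_state p01 p10 init h a =
     (let obs = map snd (filter (\<lambda>x. fst x = a) h) in
      if obs = [] then return_pmf (init a)
      else if last obs then bernoulli_pmf (1 - p10 a) else bernoulli_pmf (p01 a))"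

fun traj :: "policy \<Rightarrow> (nat \<Rightarrow> real) \<Rightarrow> (nat \<Rightarrow> real) \<Rightarrow> (nat \<Rightarrow> bool) \<Rightarrow> nat \<Rightarrow> history pmf" where
  "traj pol p01 p10 init 0 = return_pmf []"
| "traj pol p01 p10 init (Suc n) =
     bind_pmf (traj pol p01 p10 init n) (\<lambda>h.
     bind_pmf (pol h) (\<lambda>a.
     map_pmf (\<lambda>s. h @ [(a, s)]) (next_state p01 p10 init h a)))"

definition total_reward :: "history \<Rightarrow> real" where
  "total_reward h = sum_list (map (\<lambda>x. of_bool (snd x)) h)"

definition regret :: "nat \<Rightarrow> policy \<Rightarrow> (nat \<Rightarrow> real) \<Rightarrow> (nat \<Rightarrow> real) \<Rightarrow> (nat \<Rightarrow> bool) \<Rightarrow> nat \<Rightarrow> real" where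
  "regret K pol p01 p10 init n =
     real n * mu_star K p01 p10 - measure_pmf.expectation (traj pol p01 p10 init n) total_reward"

definition uniformly_good :: "nat \<Rightarrow> policy \<Rightarrow> bool" where
  "uniformly_good K pol \<longleftrightarrow> is_policy K pol \<and>
     (\<forall>p01 p10 init. valid_instance K p01 p10 \<longrightarrow>
        (\<forall>\<beta>>0. (\<lambda>n. regret K pol p01 p10 init n) \<in> o(\<lambda>n. real n powr \<beta>)))"

end

theory Submission
  imports Defs "HOL-Real_Asymp.Real_Asymp"
begin


type_synonym kernel = "history \<Rightarrow> nat \<Rightarrow> bool pmf"

fun gtraj :: "policy \<Rightarrow> kernel \<Rightarrow> nat \<Rightarrow> history pmf" where
  "gtraj pol ns 0 = return_pmf []"
| "gtraj pol ns (Suc n) =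
     bind_pmf (gtraj pol ns n) (\<lambda>h. bind_pmf (pol h) (\<lambda>a. map_pmf (\<lambda>s. h @ [(a, s)]) (ns h a)))"

lemma traj_gtraj: "traj pol p01 p10 init n = gtraj pol (next_state p01 p10 init) n"
  by (induction n) auto

definition finpol :: "policy \<Rightarrow> bool" where "finpol pol \<longleftrightarrow> (\<forall>h. finite (set_pmf (pol h)))"

lemma fin_bool_pmf[simp]: "finite (set_pmf (M :: bool pmf))"
  by (rule finite_subset[of _ UNIV]) auto

lemma fin_inner: "finpol pol \<Longrightarrow> finite (set_pmf (bind_pmf (pol h) (\<lambda>a. map_pmf (\<lambda>s. h @ [(a, s)]) (ns h a))))"
  by (auto simp: finpol_def)

lemma fin_gtraj: "finpol pol \<Longrightarrow> finite (set_pmf (gtraj pol ns n))"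
  by (induction n) (auto simp: finpol_def)

abbreviation EE :: "'a pmf \<Rightarrow> ('a \<Rightarrow> real) \<Rightarrow> real" where "EE M f \<equiv> measure_pmf.expectation M f"

lemma E_sumform: "finite (set_pmf M) \<Longrightarrow> EE M f = (\<Sum>x\<in>set_pmf M. pmf M x * f x)"
  by (subst integral_measure_pmf_real[of "set_pmf M"]) (auto simp: mult.commute)

lemma E_bind: assumes "finite (set_pmf p)" "\<And>x. x \<in> set_pmf p \<Longrightarrow> finite (set_pmf (f x))"
  shows "EE (bind_pmf p f) g = EE p (\<lambda>x. EE (f x) g)"
proof -
  have "EE (bind_pmf p f) g = (\<Sum>a\<in>set_pmf p. pmf p a *\<^sub>R EE (f a) g)"
    by (rule pmf_expectation_bind) (use assms in auto)
  also have "\<dots> = EE p (\<lambda>x. EE (f x) g)"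
    by (subst integral_measure_pmf[of "set_pmf p"]) (use assms in auto)
  finally show ?thesis .
qed

lemma E_step: assumes "finpol pol"
  shows "EE (gtraj pol ns (Suc n)) F = EE (gtraj pol ns n) (\<lambda>h. EE (pol h) (\<lambda>a. EE (ns h a) (\<lambda>s. F (h @ [(a,s)]))))"
proof -
  have "EE (gtraj pol ns (Suc n)) F = EE (gtraj pol ns n) (\<lambda>h. EE (bind_pmf (pol h) (\<lambda>a. map_pmf (\<lambda>s. h @ [(a, s)]) (ns h a))) F)"
    by (simp only: gtraj.simps, rule E_bind) (use assms fin_gtraj fin_inner in auto)
  also have "\<dots> = EE (gtraj pol ns n) (\<lambda>h. EE (pol h) (\<lambda>a. EE (ns h a) (\<lambda>s. F (h @ [(a,s)]))))"
    by (subst E_bind) (use assms in \<open>auto simp: finpol_def\<close>)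
  finally show ?thesis .
qed

lemma E_add: "finite (set_pmf M) \<Longrightarrow> EE M (\<lambda>x. f x + g x) = EE M f + EE M g"
  by (simp add: E_sumform sum.distrib algebra_simps)
lemma E_diff: "finite (set_pmf M) \<Longrightarrow> EE M (\<lambda>x. f x - g x) = EE M f - EE M g"
  by (simp add: E_sumform sum_subtractf algebra_simps)
lemma E_cmult: "EE M (\<lambda>x. c * f x) = c * EE M f"
  by simp
lemma E_multc: "EE M (\<lambda>x. f x * c) = EE M f * c"
  by simp
lemma E_const: "EE M (\<lambda>x. c) = c"
  by simp
lemma E_mono: "finite (set_pmf M) \<Longrightarrow> (\<And>x. x \<in> set_pmf M \<Longrightarrow> f x \<le> g x) \<Longrightarrow> EE M f \<le> EE M g"
  by (simp add: E_sumform sum_mono mult_left_mono)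
lemma E_nonneg: "finite (set_pmf M) \<Longrightarrow> (\<And>x. x \<in> set_pmf M \<Longrightarrow> 0 \<le> f x) \<Longrightarrow> 0 \<le> EE M f"
  using E_mono[of M "\<lambda>_. 0" f] by simp
lemma E_cong: "(\<And>x. x \<in> set_pmf M \<Longrightarrow> f x = g x) \<Longrightarrow> EE M f = EE M g"
  by (rule integral_cong_AE) (auto simp: AE_measure_pmf_iff)
lemma E_sum: "finite (set_pmf M) \<Longrightarrow> EE M (\<lambda>x. \<Sum>i\<in>A. f i x) = (\<Sum>i\<in>A. EE M (f i))"
  by (simp add: E_sumform sum_distrib_left sum.swap[of _ A])
lemma E_abs: "finite (set_pmf M) \<Longrightarrow> \<bar>EE M f\<bar> \<le> EE M (\<lambda>x. \<bar>f x\<bar>)"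
  by (simp add: E_sumform, rule order.trans[OF sum_abs]) (simp add: abs_mult)
lemma E_bool: "EE (M::bool pmf) f = pmf M True * f True + pmf M False * f False"
  by (subst integral_measure_pmf[of UNIV]) (auto simp: UNIV_bool)



definition addf :: "(history \<Rightarrow> nat \<times> bool \<Rightarrow> real) \<Rightarrow> history \<Rightarrow> real" where
  "addf inc h = (\<Sum>t<length h. inc (take t h) (h ! t))"

lemma addf_Nil[simp]: "addf inc [] = 0"
  by (simp add: addf_def)

lemma addf_snoc[simp]: "addf inc (h @ [x]) = addf inc h + inc h x"
  unfolding addf_def by (simp add: nth_append)

definition compen :: "kernel \<Rightarrow> (history \<Rightarrow> nat \<times> bool \<Rightarrow> real) \<Rightarrow> history \<Rightarrow> nat \<times> bool \<Rightarrow> real" where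
  "compen ns inc h x = EE (ns h (fst x)) (\<lambda>s. inc h (fst x, s))"

lemma compensator:
  assumes "finpol pol"
  shows "EE (gtraj pol ns n) (addf inc) = EE (gtraj pol ns n) (addf (compen ns inc))"
proof (induction n)
  case 0
  then show ?case by simp
next
  case (Suc n)
  have fp: "\<And>h. finite (set_pmf (pol h))" using assms by (simp add: finpol_def)
  have "EE (gtraj pol ns (Suc n)) (addf inc) =
     EE (gtraj pol ns n) (\<lambda>h. EE (pol h) (\<lambda>a. EE (ns h a) (\<lambda>s. addf inc h + inc h (a, s))))"
    by (simp only: E_step[OF assms]) simp
  also have "\<dots> = EE (gtraj pol ns n) (\<lambda>h. addf inc h + EE (pol h) (\<lambda>a. compen ns inc h (a, s0)))"
    by (simp add: E_add fp compen_def)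
  also have "\<dots> = EE (gtraj pol ns n) (addf inc) + EE (gtraj pol ns n) (\<lambda>h. EE (pol h) (\<lambda>a. compen ns inc h (a, s0)))"
    by (simp add: E_add fin_gtraj[OF assms])
  also have "\<dots> = EE (gtraj pol ns n) (addf (compen ns inc)) + EE (gtraj pol ns n) (\<lambda>h. EE (pol h) (\<lambda>a. compen ns inc h (a, s0)))"
    using Suc by simp
  also have "\<dots> = EE (gtraj pol ns n) (\<lambda>h. addf (compen ns inc) h + EE (pol h) (\<lambda>a. compen ns inc h (a, s0)))"
    by (simp add: E_add fin_gtraj[OF assms])
  also have "\<dots> = EE (gtraj pol ns n) (\<lambda>h. EE (pol h) (\<lambda>a. EE (ns h a) (\<lambda>s. addf (compen ns inc) h + compen ns inc h (a, s))))"
    by (simp add: E_add fp compen_def)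
  also have "\<dots> = EE (gtraj pol ns (Suc n)) (addf (compen ns inc))"
    by (simp only: E_step[OF assms]) simp
  finally show ?case .
qed

definition llr :: "kernel \<Rightarrow> kernel \<Rightarrow> history \<Rightarrow> nat \<times> bool \<Rightarrow> real" where
  "llr ns ns' h x = ln (pmf (ns h (fst x)) (snd x) / pmf (ns' h (fst x)) (snd x))"

definition abscont :: "kernel \<Rightarrow> kernel \<Rightarrow> bool" where
  "abscont ns ns' \<longleftrightarrow> (\<forall>h a s. pmf (ns h a) s > 0 \<longrightarrow> pmf (ns' h a) s > 0)"

lemma com_bool:
  assumes ac: "abscont ns ns'" and F: "\<And>s. 0 \<le> F s"
  shows "EE (ns h a) (\<lambda>s. F s * exp (- llr ns ns' h (a, s))) \<le> EE (ns' h a) F"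
proof -
  have "pmf (ns h a) s * (F s * exp (- llr ns ns' h (a, s))) \<le> pmf (ns' h a) s * F s" for s
  proof (cases "pmf (ns h a) s > 0")
    case True
    then have "pmf (ns' h a) s > 0" using ac by (auto simp: abscont_def)
    then show ?thesis using True
      by (simp add: llr_def ln_div exp_diff)
  next
    case False
    then have "pmf (ns h a) s = 0" using pmf_nonneg[of "ns h a" s] by linarith
    then show ?thesis using F[of s] by simp
  qed
  then show ?thesis by (simp add: E_bool add_mono)
qed

lemma change_measure:
  assumes "finpol pol" "abscont ns ns'" 
  shows "(\<And>h. 0 \<le> F h) \<Longrightarrow> EE (gtraj pol ns n) (\<lambda>h. F h * exp (- addf (llr ns ns') h)) \<le> EE (gtraj pol ns' n) F"
proof (induction n arbitrary: F)
  case 0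
  then show ?case by simp
next
  case (Suc n)
  have fp: "\<And>h. finite (set_pmf (pol h))" using assms by (simp add: finpol_def)
  define G where "G h = EE (pol h) (\<lambda>a. EE (ns h a) (\<lambda>s. F (h @ [(a,s)]) * exp (- llr ns ns' h (a, s))))" for h
  have G0: "0 \<le> G h" for h
    unfolding G_def by (intro E_nonneg fp fin_bool_pmf mult_nonneg_nonneg Suc.prems) auto
  have "EE (gtraj pol ns (Suc n)) (\<lambda>h. F h * exp (- addf (llr ns ns') h))
      = EE (gtraj pol ns n) (\<lambda>h. EE (pol h) (\<lambda>a. EE (ns h a) (\<lambda>s. (F (h @ [(a,s)]) * exp (- llr ns ns' h (a, s))) * exp (- addf (llr ns ns') h))))"
    by (simp only: E_step[OF assms(1)] addf_snoc minus_add_distrib exp_add mult.assoc) (simp only: mult.commute)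
  also have "\<dots> = EE (gtraj pol ns n) (\<lambda>h. G h * exp (- addf (llr ns ns') h))"
    by (simp only: G_def integral_mult_left_zero)
  also have "\<dots> \<le> EE (gtraj pol ns' n) G"
    by (rule Suc.IH) (rule G0)
  also have "\<dots> \<le> EE (gtraj pol ns' n) (\<lambda>h. EE (pol h) (\<lambda>a. EE (ns' h a) (\<lambda>s. F (h @ [(a,s)]))))"
    unfolding G_def
    by (intro E_mono fin_gtraj assms fp com_bool Suc.prems)
  also have "\<dots> = EE (gtraj pol ns' (Suc n)) F"
    by (simp only: E_step[OF assms(1)])
  finally show ?case .
qed



lemma exp_tangent: "exp (- y) \<ge> exp (- m) * (1 + m - (y::real))"
proof -
  have "1 + m - y \<le> exp (m - y)" using exp_ge_add_one_self[of "m - y"] by (simp only: add_diff_eq)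
  then have "exp (- m) * (1 + m - y) \<le> exp (- m) * exp (m - y)"
    by (intro mult_left_mono) auto
  also have "\<dots> = exp (- y)" by (simp add: exp_add[symmetric])
  finally show ?thesis .
qed

lemma xlnx_ge: "0 \<le> (x::real) \<Longrightarrow> x * ln x \<ge> -1"
proof (cases "x = 0")
  case False
  assume x: "0 \<le> x"
  then have xp: "x > 0" using False by simp
  have "ln (1/x) \<le> 1/x - 1" using xp by (intro ln_le_minus_one) auto
  then have "- ln x \<le> 1/x - 1" using xp by (simp add: ln_div)
  then have "x * (- ln x) \<le> x * (1/x - 1)" using xp by (intro mult_left_mono) auto
  then have "- (x * ln x) \<le> 1 - x" using xp by (simp add: algebra_simps)
  then show ?thesis using xp by linarith
qed simp

lemma event_bound:
  assumes fp: "finpol pol" and ac: "abscont ns ns'"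
    and p: "0 < EE (gtraj pol ns n) (\<lambda>h. of_bool (B h))"
  shows "0 < EE (gtraj pol ns' n) (\<lambda>h. of_bool (B h))"
    and "EE (gtraj pol ns n) (\<lambda>h. of_bool (B h) * addf (llr ns ns') h) \<ge>
        EE (gtraj pol ns n) (\<lambda>h. of_bool (B h)) * ln (EE (gtraj pol ns n) (\<lambda>h. of_bool (B h)))
      - EE (gtraj pol ns n) (\<lambda>h. of_bool (B h)) * ln (EE (gtraj pol ns' n) (\<lambda>h. of_bool (B h)))"
proof -
  let ?P = "gtraj pol ns n" and ?P' = "gtraj pol ns' n" and ?L = "addf (llr ns ns')"
  define pp where "pp = EE ?P (\<lambda>h. of_bool (B h))"
  define pp' where "pp' = EE ?P' (\<lambda>h. of_bool (B h))"
  define q where "q = EE ?P (\<lambda>h. of_bool (B h) * ?L h)"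
  define m where "m = q / pp"
  have pp: "pp > 0" using p by (simp add: pp_def)
  have fin: "finite (set_pmf ?P)" by (rule fin_gtraj[OF fp])
  have "pp' \<ge> EE ?P (\<lambda>h. of_bool (B h) * exp (- ?L h))"
    unfolding pp'_def by (rule change_measure[OF fp ac]) simp
  also have "EE ?P (\<lambda>h. of_bool (B h) * exp (- ?L h)) \<ge> EE ?P (\<lambda>h. exp (- m) * ((1 + m) * of_bool (B h) - of_bool (B h) * ?L h))"
  proof (intro E_mono fin)
    fix h
    show "exp (- m) * ((1 + m) * of_bool (B h) - of_bool (B h) * ?L h) \<le> of_bool (B h) * exp (- ?L h)"
      using exp_tangent[where y="?L h" and m=m] by (cases "B h") (auto simp: algebra_simps)
  qed
  also have "EE ?P (\<lambda>h. exp (- m) * ((1 + m) * of_bool (B h) - of_bool (B h) * ?L h)) = exp (- m) * ((1 + m) * pp - q)"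
    by (simp add: E_diff fin pp_def q_def)
  also have "(1 + m) * pp - q = pp" using pp by (simp add: m_def algebra_simps)
  finally have pp': "exp (- m) * pp \<le> pp'" by simp
  then have pp'pos: "pp' > 0" using pp by (smt (verit) exp_gt_zero mult_pos_pos)
  then show "0 < EE ?P' (\<lambda>h. of_bool (B h))" by (simp add: pp'_def)
  have "ln (exp (- m) * pp) \<le> ln pp'" using pp' pp pp'pos by simp
  then have "- m + ln pp \<le> ln pp'" using pp by (simp add: ln_mult)
  then have "pp * (ln pp - ln pp') \<le> pp * m" using pp by (intro mult_left_mono) auto
  also have "pp * m = q" using pp by (simp add: m_def)
  finally show "q \<ge> pp * ln pp - pp * ln pp'" unfolding q_def pp_def pp'_def
    by (simp add: algebra_simps pp_def pp'_def q_def)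
qed

lemma E_ind_le1: "EE M (\<lambda>h. of_bool (B h)) \<le> 1"
proof -
  have "(\<lambda>h. of_bool (B h)::real) = indicator {h. B h}" by (auto simp: indicator_def fun_eq_iff)
  then show ?thesis using measure_pmf.prob_le_1[of M "{h. B h}"] by simp
qed

lemma E_ind_ge0: "finite (set_pmf M) \<Longrightarrow> EE M (\<lambda>h. of_bool (B h)) \<ge> 0"
  by (rule E_nonneg) auto

lemma event_bound2:
  assumes fp: "finpol pol" and ac: "abscont ns ns'"
  shows "EE (gtraj pol ns n) (\<lambda>h. of_bool (B h) * addf (llr ns ns') h) \<ge> -1"
proof (cases "EE (gtraj pol ns n) (\<lambda>h. of_bool (B h)) > 0")
  case True
  let ?p = "EE (gtraj pol ns n) (\<lambda>h. of_bool (B h))"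
  let ?p' = "EE (gtraj pol ns' n) (\<lambda>h. of_bool (B h))"
  have p'pos: "?p' > 0" by (rule event_bound(1)[OF fp ac True])
  have "?p * ln ?p' \<le> 0" using True p'pos E_ind_le1[of "gtraj pol ns' n" B]
    by (intro mult_nonneg_nonpos) auto
  moreover have "?p * ln ?p \<ge> -1" using True by (intro xlnx_ge) auto
  ultimately show ?thesis using event_bound(2)[OF fp ac True] by linarith
next
  case False
  let ?P = "gtraj pol ns n"
  have fin: "finite (set_pmf ?P)" by (rule fin_gtraj[OF fp])
  have "EE ?P (\<lambda>h. of_bool (B h)) = 0" using False E_ind_ge0[OF fin, of B] by linarith
  then have "(\<Sum>x\<in>set_pmf ?P. pmf ?P x * of_bool (B x)) = 0" by (simp add: E_sumform[OF fin])
  then have z: "\<forall>x\<in>set_pmf ?P. pmf ?P x * of_bool (B x) = 0"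
    by (subst (asm) sum_nonneg_eq_0_iff) (auto simp: fin)
  have "EE ?P (\<lambda>h. of_bool (B h) * addf (llr ns ns') h) = 0"
    unfolding E_sumform[OF fin] using z by (intro sum.neutral) auto
  then show ?thesis by simp
qed

lemma kl_lower:
  assumes fp: "finpol pol" and ac: "abscont ns ns'"
    and p: "0 < EE (gtraj pol ns n) (\<lambda>h. of_bool (B h))"
  shows "EE (gtraj pol ns n) (addf (llr ns ns')) \<ge>
      - EE (gtraj pol ns n) (\<lambda>h. of_bool (B h)) * ln (EE (gtraj pol ns' n) (\<lambda>h. of_bool (B h))) - 2"
proof -
  let ?P = "gtraj pol ns n" and ?L = "addf (llr ns ns')"
  let ?p = "EE (gtraj pol ns n) (\<lambda>h. of_bool (B h))"
  have fin: "finite (set_pmf ?P)" by (rule fin_gtraj[OF fp])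
  have "EE ?P ?L = EE ?P (\<lambda>h. of_bool (B h) * ?L h + of_bool (\<not> B h) * ?L h)"
    by (rule E_cong) auto
  also have "\<dots> = EE ?P (\<lambda>h. of_bool (B h) * ?L h) + EE ?P (\<lambda>h. of_bool (\<not> B h) * ?L h)"
    by (rule E_add[OF fin])
  finally have eq: "EE ?P ?L = EE ?P (\<lambda>h. of_bool (B h) * ?L h) + EE ?P (\<lambda>h. of_bool (\<not> B h) * ?L h)" .
  have "?p * ln ?p \<ge> -1" using p by (intro xlnx_ge) auto
  then show ?thesis using eq event_bound(2)[OF fp ac p] event_bound2[OF fp ac, where B="\<lambda>h. \<not> B h" and n=n]
    by linarith
qed



definition obs :: "nat \<Rightarrow> history \<Rightarrow> bool list" where
  "obs a h = map snd (filter (\<lambda>x. fst x = a) h)"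

lemma obs_Nil[simp]: "obs a [] = []" by (simp add: obs_def)
lemma obs_snoc[simp]: "obs a (h @ [x]) = (if fst x = a then obs a h @ [snd x] else obs a h)"
  by (simp add: obs_def)

definition Nc :: "nat \<Rightarrow> history \<Rightarrow> real" where "Nc a h = real (length (obs a h))"

lemma Nc_snoc[simp]: "Nc a (h @ [x]) = Nc a h + of_bool (fst x = a)"
  by (simp add: Nc_def)
lemma Nc_Nil[simp]: "Nc a [] = 0" by (simp add: Nc_def)
lemma Nc_nonneg: "Nc a h \<ge> 0" by (simp add: Nc_def)

definition Sinc :: "real \<Rightarrow> nat \<Rightarrow> history \<Rightarrow> nat \<times> bool \<Rightarrow> real" where
  "Sinc m a h x = (if fst x = a then of_bool (snd x) - m else 0)"

abbreviation Sf :: "real \<Rightarrow> nat \<Rightarrow> history \<Rightarrow> real" where "Sf m a \<equiv> addf (Sinc m a)"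

definition ib :: "bool \<Rightarrow> real" where "ib b = of_bool b"

lemma next_state_exp:
  assumes "0 \<le> p01 a" "p01 a \<le> 1" "0 \<le> p10 a" "p10 a \<le> 1"
  shows "EE (next_state p01 p10 init h a) f =
    (if obs a h = [] then f (init a)
     else if last (obs a h) then (1 - p10 a) * f True + p10 a * f False
     else p01 a * f True + (1 - p01 a) * f False)"
proof (cases "obs a h = []")
  case True
  then show ?thesis by (simp add: next_state_def obs_def[symmetric] Let_def)
next
  case False
  then show ?thesis using assms by (auto simp: next_state_def obs_def[symmetric] Let_def E_bool)
qed

definition Scomp :: "real \<Rightarrow> real \<Rightarrow> bool \<Rightarrow> nat \<Rightarrow> history \<Rightarrow> nat \<times> bool \<Rightarrow> real" where
  "Scomp m lam b0 a h x = (if fst x = a then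
     (if obs a h = [] then ib b0 - m else lam * (ib (last (obs a h)) - m)) else 0)"

lemma alg1: assumes "(x::real) + y > 0"
  shows "(1 - y) * (ib True - x / (x + y)) + y * (ib False - x / (x + y)) = (1 - x - y) * (ib True - x / (x + y))"
proof -
  define m where "m = x / (x + y)"
  have "m * (x + y) = x" using assms by (simp add: m_def)
  then have hx: "m * x + m * y = x" by (simp add: algebra_simps)
  show ?thesis unfolding m_def[symmetric] ib_def using hx by (simp add: algebra_simps)
qed

lemma alg2: assumes "(x::real) + y > 0"
  shows "x * (ib True - x / (x + y)) + (1 - x) * (ib False - x / (x + y)) = (1 - x - y) * (ib False - x / (x + y))"
proof -
  define m where "m = x / (x + y)"
  have "m * (x + y) = x" using assms by (simp add: m_def)
  then have hx: "m * x + m * y = x" by (simp add: algebra_simps)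
  show ?thesis unfolding m_def[symmetric] ib_def using hx by (simp add: algebra_simps)
qed

lemma Scomp_eq:
  assumes "0 < p01 a" "p01 a \<le> 1" "0 < p10 a" "p10 a \<le> 1"
  shows "compen (next_state p01 p10 init) (Sinc (p01 a / (p01 a + p10 a)) a) =
         Scomp (p01 a / (p01 a + p10 a)) (1 - p01 a - p10 a) (init a) a"
proof (intro ext)
  fix h x
  have pos: "p01 a + p10 a > 0" using assms by simp
  show "compen (next_state p01 p10 init) (Sinc (p01 a / (p01 a + p10 a)) a) h x =
         Scomp (p01 a / (p01 a + p10 a)) (1 - p01 a - p10 a) (init a) a h x"
    using assms pos alg1[OF pos] alg2[OF pos] unfolding compen_def Scomp_def Sinc_def ib_def[symmetric]
    by (cases "fst x = a") (auto simp: next_state_exp)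
qed

lemma Sf_snoc: "Sf m a (h @ [x]) = Sf m a h + (if fst x = a then ib (snd x) - m else 0)"
  by (simp add: Sinc_def ib_def)

lemma Scomp_snoc: "addf (Scomp m lam b0 a) (h @ [x]) = addf (Scomp m lam b0 a) h + 
   (if fst x = a then (if obs a h = [] then ib b0 - m else lam * (ib (last (obs a h)) - m)) else 0)"
  by (simp add: Scomp_def)

lemma Scomp_addf:
  "addf (Scomp m lam b0 a) h = (if obs a h = [] then 0 else (ib b0 - m) + lam * (Sf m a h - (ib (last (obs a h)) - m)))
   \<and> (obs a h = [] \<longrightarrow> Sf m a h = 0)"
proof (induction h rule: rev_induct)
  case Nil
  then show ?case by simp
next
  case (snoc x h)
  show ?case
  proof (cases "fst x = a")
    case False
    then show ?thesis using snoc by (simp only: Sf_snoc Scomp_snoc obs_snoc if_False) simp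
  next
    case True
    then show ?thesis using snoc by (simp only: Sf_snoc Scomp_snoc obs_snoc if_True)
       (cases "obs a h = []"; simp add: algebra_simps)
  qed
qed

lemma ES_bound:
  assumes fp: "finpol pol" and "0 < p01 a" "p01 a \<le> 1" "0 < p10 a" "p10 a \<le> 1"
  shows "\<bar>EE (traj pol p01 p10 init n) (Sf (p01 a / (p01 a + p10 a)) a)\<bar> \<le> 2 / (p01 a + p10 a)"
proof -
  define m where "m = p01 a / (p01 a + p10 a)"
  define lam where "lam = 1 - p01 a - p10 a"
  let ?P = "traj pol p01 p10 init n"
  have fin: "finite (set_pmf ?P)" unfolding traj_gtraj by (rule fin_gtraj[OF fp])
  have pos: "p01 a + p10 a > 0" using assms by simp
  have m01: "0 \<le> m" "m \<le> 1" using assms unfolding m_def by (auto simp: field_simps)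
  have lam1: "\<bar>lam\<bar> \<le> 1" using assms unfolding lam_def by auto
  define W where "W h = (if obs a h = [] then 0 else (ib (init a) - m) - lam * (ib (last (obs a h)) - m))" for h
  have "EE ?P (Sf m a) = EE ?P (addf (Scomp m lam (init a) a))"
    unfolding traj_gtraj m_def lam_def
    by (subst compensator[OF fp]) (simp add: Scomp_eq assms)
  also have "\<dots> = EE ?P (\<lambda>h. W h + lam * Sf m a h)"
    using Scomp_addf[of m lam "init a" a] by (intro E_cong) (auto simp: W_def algebra_simps)
  also have "\<dots> = EE ?P W + lam * EE ?P (Sf m a)"
    by (simp add: E_add fin)
  finally have eq: "(1 - lam) * EE ?P (Sf m a) = EE ?P W" by (simp add: algebra_simps)
  have Wb: "\<bar>W h\<bar> \<le> 2" for h
  proof -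
    have "\<bar>ib b - m\<bar> \<le> 1" for b using m01 by (cases b) (auto simp: ib_def)
    then have "\<bar>lam * (ib (last (obs a h)) - m)\<bar> \<le> 1"
      using lam1 by (simp add: abs_mult mult_le_one)
    then show ?thesis unfolding W_def using \<open>\<And>b. \<bar>ib b - m\<bar> \<le> 1\<close>[of "init a"] by auto
  qed
  have "EE ?P (\<lambda>h. \<bar>W h\<bar>) \<le> EE ?P (\<lambda>_. 2)"
    by (rule E_mono[OF fin]) (rule Wb)
  then have "\<bar>EE ?P W\<bar> \<le> 2"
    using E_abs[OF fin, of W] by (simp only: E_const)
  then have "(p01 a + p10 a) * \<bar>EE ?P (Sf m a)\<bar> \<le> 2"
    using eq pos by (simp add: lam_def abs_mult)
  then show ?thesis using pos unfolding m_def[symmetric] by (simp add: field_simps)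
qed



lemma finpol_is_policy: "is_policy K pol \<Longrightarrow> finpol pol"
  unfolding is_policy_def finpol_def by (meson finite_atLeastAtMost finite_subset)

lemma supp_gtraj: "is_policy K pol \<Longrightarrow> h \<in> set_pmf (gtraj pol ns n) \<Longrightarrow> length h = n \<and> (\<forall>x\<in>set h. fst x \<in> {1..K})"
proof (induction n arbitrary: h)
  case 0
  then show ?case by simp
next
  case (Suc n)
  then show ?case unfolding is_policy_def by (fastforce simp: subset_iff)
qed

lemma total_reward_snoc[simp]: "total_reward (h @ [x]) = total_reward h + of_bool (snd x)"
  by (simp add: total_reward_def)
lemma total_reward_Nil[simp]: "total_reward [] = 0"
  by (simp add: total_reward_def)

lemma decomp_pointwise:
  assumes "\<forall>x\<in>set h. fst x \<in> {1..K}"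
  shows "total_reward h = (\<Sum>a\<in>{1..K}. Sf (m a) a h + m a * Nc a h) \<and> real (length h) = (\<Sum>a\<in>{1..K}. Nc a h)"
  using assms
proof (induction h rule: rev_induct)
  case Nil
  then show ?case by simp
next
  case (snoc x h)
  then have IH: "total_reward h = (\<Sum>a\<in>{1..K}. Sf (m a) a h + m a * Nc a h)" "real (length h) = (\<Sum>a\<in>{1..K}. Nc a h)"
    by auto
  have xK: "fst x \<in> {1..K}" using snoc by auto
  have pw: "Sf (m a) a (h @ [x]) + m a * Nc a (h @ [x]) = Sf (m a) a h + m a * Nc a h + (if a = fst x then of_bool (snd x) else 0)" for a
    by (simp only: Sf_snoc Nc_snoc) (auto simp: ib_def algebra_simps)
  have s1: "(\<Sum>a\<in>{1..K}. Sf (m a) a (h @ [x]) + m a * Nc a (h @ [x])) =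
     (\<Sum>a\<in>{1..K}. Sf (m a) a h + m a * Nc a h) + (\<Sum>a\<in>{1..K}. if a = fst x then of_bool (snd x) else 0)"
    by (simp only: pw sum.distrib)
  have pw2: "Nc a (h @ [x]) = Nc a h + (if a = fst x then 1 else 0)" for a
    by (simp only: Nc_snoc) auto
  have s2: "(\<Sum>a\<in>{1..K}. Nc a (h @ [x])) = (\<Sum>a\<in>{1..K}. Nc a h) + (\<Sum>a\<in>{1..K}. if a = fst x then 1 else 0)"
    by (simp only: pw2 sum.distrib)
  have s3: "(\<Sum>a\<in>{1..K}. if a = fst x then (c::real) else 0) = c" for c
    using xK by (simp add: sum.delta')
  show ?case using IH s1 s2 s3 by simp
qed

lemma mu_eq: "mu p01 p10 a = p01 a / (p01 a + p10 a)"
  by (simp add: mu_def pi1_def)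

lemma regret_decomp:
  assumes pol: "is_policy K pol" and vi: "valid_instance K p01 p10"
  shows "\<bar>regret K pol p01 p10 init n - (\<Sum>a\<in>{1..K}. (mu_star K p01 p10 - mu p01 p10 a) * EE (traj pol p01 p10 init n) (Nc a))\<bar>
     \<le> (\<Sum>a\<in>{1..K}. 2 / (p01 a + p10 a))"
proof -
  let ?P = "traj pol p01 p10 init n"
  let ?m = "mu p01 p10"
  let ?ms = "mu_star K p01 p10"
  have fp: "finpol pol" by (rule finpol_is_policy[OF pol])
  have fin: "finite (set_pmf ?P)" unfolding traj_gtraj by (rule fin_gtraj[OF fp])
  have supp: "h \<in> set_pmf ?P \<Longrightarrow> length h = n \<and> (\<forall>x\<in>set h. fst x \<in> {1..K})" for h
    unfolding traj_gtraj by (rule supp_gtraj[OF pol])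
  have ET: "EE ?P total_reward = (\<Sum>a\<in>{1..K}. EE ?P (Sf (?m a) a) + ?m a * EE ?P (Nc a))"
  proof -
    have "EE ?P total_reward = EE ?P (\<lambda>h. \<Sum>a\<in>{1..K}. Sf (?m a) a h + ?m a * Nc a h)"
      by (rule E_cong) (use supp decomp_pointwise in blast)
    also have "\<dots> = (\<Sum>a\<in>{1..K}. EE ?P (Sf (?m a) a) + ?m a * EE ?P (Nc a))"
      by (simp add: E_sum[OF fin] E_add[OF fin])
    finally show ?thesis .
  qed
  have En: "real n = (\<Sum>a\<in>{1..K}. EE ?P (Nc a))"
  proof -
    have "EE ?P (\<lambda>h. \<Sum>a\<in>{1..K}. Nc a h) = EE ?P (\<lambda>_. real n)"
      by (rule E_cong) (use supp decomp_pointwise in force)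
    then have "real n = EE ?P (\<lambda>h. \<Sum>a\<in>{1..K}. Nc a h)" by simp
    also have "\<dots> = (\<Sum>a\<in>{1..K}. EE ?P (Nc a))" by (simp add: E_sum[OF fin])
    finally show ?thesis .
  qed
  have "regret K pol p01 p10 init n = (\<Sum>a\<in>{1..K}. (?ms - ?m a) * EE ?P (Nc a)) - (\<Sum>a\<in>{1..K}. EE ?P (Sf (?m a) a))"
    unfolding regret_def ET En by (simp add: sum_distrib_left sum.distrib sum_subtractf algebra_simps)
  moreover have "\<bar>\<Sum>a\<in>{1..K}. EE ?P (Sf (?m a) a)\<bar> \<le> (\<Sum>a\<in>{1..K}. 2 / (p01 a + p10 a))"
  proof -
    have "\<bar>\<Sum>a\<in>{1..K}. EE ?P (Sf (?m a) a)\<bar> \<le> (\<Sum>a\<in>{1..K}. \<bar>EE ?P (Sf (?m a) a)\<bar>)" by (rule sum_abs)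
    also have "\<dots> \<le> (\<Sum>a\<in>{1..K}. 2 / (p01 a + p10 a))"
      using vi unfolding valid_instance_def mu_eq
      by (intro sum_mono ES_bound fp) auto
    finally show ?thesis .
  qed
  ultimately show ?thesis by linarith
qed

lemma mu_star_ge: "a \<in> {1..K} \<Longrightarrow> mu p01 p10 a \<le> mu_star K p01 p10"
  unfolding mu_star_def by (rule Max_ge) auto

lemma mu_star_eq: "j \<in> {1..K} \<Longrightarrow> (\<forall>a\<in>{1..K}. mu p01 p10 a \<le> mu p01 p10 j) \<Longrightarrow> mu_star K p01 p10 = mu p01 p10 j"
  unfolding mu_star_def by (intro antisym Max.boundedI Max_ge) auto

lemma EN_nonneg: "is_policy K pol \<Longrightarrow> 0 \<le> EE (traj pol p01 p10 init n) (Nc a)"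
  unfolding traj_gtraj by (intro E_nonneg fin_gtraj finpol_is_policy Nc_nonneg)

lemma EN_small:
  assumes ug: "uniformly_good K pol" and vi: "valid_instance K p01 p10"
    and j: "j \<in> {1..K}" and D: "mu_star K p01 p10 - mu p01 p10 j > 0"
    and b: "\<beta> > 0" and e: "\<epsilon> > 0"
  shows "eventually (\<lambda>n. EE (traj pol p01 p10 init n) (Nc j) \<le> \<epsilon> * real n powr \<beta>) sequentially"
proof -
  let ?D = "mu_star K p01 p10 - mu p01 p10 j"
  let ?C = "(\<Sum>a\<in>{1..K}. 2 / (p01 a + p10 a))"
  have pol: "is_policy K pol" using ug by (simp add: uniformly_good_def)
  have "(\<lambda>n. regret K pol p01 p10 init n) \<in> o(\<lambda>n. real n powr \<beta>)"
    using ug vi b by (simp add: uniformly_good_def)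
  then have ev1: "eventually (\<lambda>n. \<bar>regret K pol p01 p10 init n\<bar> \<le> (\<epsilon> * ?D / 2) * \<bar>real n powr \<beta>\<bar>) sequentially"
    using D e by (auto dest!: landau_o.smallD[where c="\<epsilon> * ?D / 2"])
  have lim: "filterlim (\<lambda>n. real n powr \<beta>) at_top sequentially" using b by real_asymp
  have ev2: "eventually (\<lambda>n. ?C / (\<epsilon> * ?D / 2) \<le> real n powr \<beta>) sequentially"
    using lim by (simp add: filterlim_at_top)
  show ?thesis using ev1 ev2
  proof eventually_elim
    case (elim n)
    let ?P = "traj pol p01 p10 init n"
    have "?D * EE ?P (Nc j) \<le> (\<Sum>a\<in>{1..K}. (mu_star K p01 p10 - mu p01 p10 a) * EE ?P (Nc a))"
      using j by (intro member_le_sum mult_nonneg_nonneg EN_nonneg[OF pol]) (auto simp: mu_star_ge)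
    also have "\<dots> \<le> regret K pol p01 p10 init n + ?C"
      using regret_decomp[OF pol vi, of init n] by linarith
    also have "\<dots> \<le> (\<epsilon> * ?D / 2) * real n powr \<beta> + (\<epsilon> * ?D / 2) * real n powr \<beta>"
      using elim D e by (auto simp: field_simps)
    finally have "?D * EE ?P (Nc j) \<le> ?D * (\<epsilon> * real n powr \<beta>)" by (simp add: algebra_simps)
    then show ?case using D by simp
  qed
qed



definition alt_ok :: "nat \<Rightarrow> nat \<Rightarrow> (nat \<Rightarrow> real) \<Rightarrow> (nat \<Rightarrow> real) \<Rightarrow> (nat \<Rightarrow> real) \<Rightarrow> (nat \<Rightarrow> real) \<Rightarrow> bool" where
  "alt_ok K i p01 p10 q01 q10 \<longleftrightarrow> valid_instance K p01 p10 \<and> i \<in> {1..K} \<and>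
     (\<forall>j. j \<noteq> i \<longrightarrow> q01 j = p01 j \<and> q10 j = p10 j) \<and> 0 < q01 i \<and> q01 i < 1 \<and> 0 < q10 i \<and> q10 i < 1"

lemma ns_same: "p01 b = q01 b \<Longrightarrow> p10 b = q10 b \<Longrightarrow> next_state p01 p10 init h b = next_state q01 q10 init h b"
  by (simp add: next_state_def)

lemma abscont_alt:
  assumes "alt_ok K i p01 p10 q01 q10"
  shows "abscont (next_state p01 p10 init) (next_state q01 q10 init)"
  unfolding abscont_def
proof (intro allI impI)
  fix h a s
  assume pos: "pmf (next_state p01 p10 init h a) s > 0"
  show "pmf (next_state q01 q10 init h a) s > 0"
  proof (cases "a = i")
    case False
    then show ?thesis using assms pos ns_same[of p01 a q01 p10 q10 init h] by (auto simp: alt_ok_def)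
  next
    case True
    show ?thesis
    proof (cases "obs a h = []")
      case True
      then show ?thesis using pos by (simp add: next_state_def obs_def[symmetric])
    next
      case False
      then show ?thesis using assms \<open>a = i\<close> by (cases s) (auto simp: next_state_def obs_def[symmetric] alt_ok_def)
    qed
  qed
qed

definition Kcomp :: "nat \<Rightarrow> real \<Rightarrow> real \<Rightarrow> history \<Rightarrow> nat \<times> bool \<Rightarrow> real" where
  "Kcomp i d0 d1 h x = (if fst x = i \<and> obs i h \<noteq> [] then (if last (obs i h) then d1 else d0) else 0)"

lemma ln_self_div: "ln ((x::real) / x) = 0"
  by (cases "x = 0") auto

lemma Kcomp_eq:
  assumes "alt_ok K i p01 p10 q01 q10"
  shows "compen (next_state p01 p10 init) (llr (next_state p01 p10 init) (next_state q01 q10 init)) =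
    Kcomp i (xlogxy (p01 i) (q01 i) + xlogxy (1 - p01 i) (1 - q01 i))
            (xlogxy (p10 i) (q10 i) + xlogxy (1 - p10 i) (1 - q10 i))"
proof (intro ext)
  fix h :: history and x :: "nat \<times> bool"
  obtain b s where x: "x = (b, s)" by force
  have v: "0 < p01 i" "p01 i \<le> 1" "0 < p10 i" "p10 i \<le> 1" "0 < q01 i" "q01 i < 1" "0 < q10 i" "q10 i < 1"
    using assms by (auto simp: alt_ok_def valid_instance_def)
  show "compen (next_state p01 p10 init) (llr (next_state p01 p10 init) (next_state q01 q10 init)) h x =
    Kcomp i (xlogxy (p01 i) (q01 i) + xlogxy (1 - p01 i) (1 - q01 i))
            (xlogxy (p10 i) (q10 i) + xlogxy (1 - p10 i) (1 - q10 i)) h x"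
  proof (cases "b = i")
    case False
    then have "next_state q01 q10 init h b = next_state p01 p10 init h b"
      using assms ns_same[of p01 b q01 p10 q10 init h] by (auto simp: alt_ok_def)
    moreover have "(\<lambda>s. ln (if pmf (next_state p01 p10 init h b) s = 0 then 0 else 1)) = (\<lambda>s. 0::real)"
      by (rule ext) (simp add: ln_0)
    ultimately show ?thesis using False by (simp add: x compen_def llr_def Kcomp_def)
  next
    case True
    show ?thesis
    proof (cases "obs i h = []")
      case True
      then show ?thesis using \<open>b = i\<close> by (simp add: x compen_def llr_def Kcomp_def next_state_def obs_def[symmetric])
    next
      case False
      then show ?thesis using \<open>b = i\<close> v
        by (simp add: x compen_def llr_def Kcomp_def next_state_def obs_def[symmetric] E_bool xlogxy_def)
    qed
  qed
qed

lemma Kcomp_snoc: "addf (Kcomp i d0 d1) (h @ [x]) = addf (Kcomp i d0 d1) h +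
   (if fst x = i \<and> obs i h \<noteq> [] then (if last (obs i h) then d1 else d0) else 0)"
  by (simp add: Kcomp_def)

lemma Sf_zero: "obs a h = [] \<Longrightarrow> Sf m a h = 0"
  using Scomp_addf[of m 0 True a h] by blast

lemma Nc_zero: "obs a h = [] \<Longrightarrow> Nc a h = 0"
  by (simp add: Nc_def)

lemma Kcomp_addf:
  "addf (Kcomp i d0 d1) h = (if obs i h = [] then 0 else d0 * (Nc i h - 1) + (d1 - d0) * (Sf m i h + m * Nc i h - ib (last (obs i h))))"
proof (induction h rule: rev_induct)
  case Nil
  then show ?case by simp
next
  case (snoc x h)
  show ?case
  proof (cases "fst x = i")
    case False
    then show ?thesis using snoc by (simp only: Sf_snoc Kcomp_snoc obs_snoc Nc_snoc if_False) simp
  next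
    case True
    show ?thesis
    proof (cases "obs i h = []")
      case True
      then show ?thesis using snoc \<open>fst x = i\<close> Sf_zero[of i h m] Nc_zero[of i h]
        by (simp only: Sf_snoc Kcomp_snoc obs_snoc Nc_snoc if_True) (simp add: algebra_simps)
    next
      case False
      then show ?thesis using snoc \<open>fst x = i\<close>
        by (simp only: Sf_snoc Kcomp_snoc obs_snoc Nc_snoc if_True) (simp add: algebra_simps ib_def)
    qed
  qed
qed

lemma EL_upper:
  assumes pol: "is_policy K pol" and ok: "alt_ok K i p01 p10 q01 q10"
  defines "d0 \<equiv> xlogxy (p01 i) (q01 i) + xlogxy (1 - p01 i) (1 - q01 i)"
    and "d1 \<equiv> xlogxy (p10 i) (q10 i) + xlogxy (1 - p10 i) (1 - q10 i)"
    and "m \<equiv> p01 i / (p01 i + p10 i)"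
  shows "EE (traj pol p01 p10 init n) (addf (llr (next_state p01 p10 init) (next_state q01 q10 init)))
     \<le> ((1 - m) * d0 + m * d1) * EE (traj pol p01 p10 init n) (Nc i)
        + (\<bar>d0\<bar> + \<bar>d1 - d0\<bar> + \<bar>d1 - d0\<bar> * (2 / (p01 i + p10 i)))"
proof -
  let ?P = "traj pol p01 p10 init n"
  let ?I = "(1 - m) * d0 + m * d1"
  have fp: "finpol pol" by (rule finpol_is_policy[OF pol])
  have fin: "finite (set_pmf ?P)" unfolding traj_gtraj by (rule fin_gtraj[OF fp])
  have v: "0 < p01 i" "p01 i \<le> 1" "0 < p10 i" "p10 i \<le> 1"
    using ok by (auto simp: alt_ok_def valid_instance_def)
  define W where "W h = (if obs i h = [] then 0 else - d0 - (d1 - d0) * ib (last (obs i h)))" for h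
  have "EE ?P (addf (llr (next_state p01 p10 init) (next_state q01 q10 init))) = EE ?P (addf (Kcomp i d0 d1))"
    unfolding traj_gtraj d0_def d1_def
    by (subst compensator[OF fp]) (simp add: Kcomp_eq[OF ok])
  also have "\<dots> = EE ?P (\<lambda>h. ?I * Nc i h + W h + (d1 - d0) * Sf m i h)"
  proof (rule E_cong)
    fix h
    show "addf (Kcomp i d0 d1) h = ?I * Nc i h + W h + (d1 - d0) * Sf m i h"
      using Sf_zero[of i h m] Nc_zero[of i h] unfolding Kcomp_addf[where m=m] W_def
      by (auto simp: algebra_simps)
  qed
  also have "\<dots> = ?I * EE ?P (Nc i) + EE ?P W + (d1 - d0) * EE ?P (Sf m i)"
    by (simp add: E_add fin)
  also have "\<dots> \<le> ?I * EE ?P (Nc i) + (\<bar>d0\<bar> + \<bar>d1 - d0\<bar>) + \<bar>d1 - d0\<bar> * (2 / (p01 i + p10 i))"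
  proof -
    have Wb: "\<bar>W h\<bar> \<le> \<bar>d0\<bar> + \<bar>d1 - d0\<bar>" for h
    proof -
      have "\<bar>(d1 - d0) * ib b\<bar> \<le> \<bar>d1 - d0\<bar>" for b by (cases b) (auto simp: ib_def)
      then show ?thesis unfolding W_def by (smt (verit))
    qed
    have "EE ?P (\<lambda>h. \<bar>W h\<bar>) \<le> EE ?P (\<lambda>_. \<bar>d0\<bar> + \<bar>d1 - d0\<bar>)"
      by (rule E_mono[OF fin]) (rule Wb)
    then have w: "EE ?P W \<le> \<bar>d0\<bar> + \<bar>d1 - d0\<bar>"
      using E_abs[OF fin, of W] by (simp only: E_const; linarith)
    have "\<bar>EE ?P (Sf m i)\<bar> \<le> 2 / (p01 i + p10 i)"
      unfolding m_def by (rule ES_bound[where a=i and ?p01.0=p01 and ?p10.0=p10, OF fp v])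
    then have "(d1 - d0) * EE ?P (Sf m i) \<le> \<bar>d1 - d0\<bar> * (2 / (p01 i + p10 i))"
    proof -
      have "(d1 - d0) * EE ?P (Sf m i) \<le> \<bar>d1 - d0\<bar> * \<bar>EE ?P (Sf m i)\<bar>"
        by (simp only: abs_mult[symmetric] abs_ge_self)
      also have "\<dots> \<le> \<bar>d1 - d0\<bar> * (2 / (p01 i + p10 i))"
        using \<open>\<bar>EE ?P (Sf m i)\<bar> \<le> 2 / (p01 i + p10 i)\<close> by (intro mult_left_mono) auto
      finally show ?thesis .
    qed
    then show ?thesis using w by linarith
  qed
  finally show ?thesis by (simp add: algebra_simps)
qed



lemma alt_valid: "alt_ok K i p01 p10 q01 q10 \<Longrightarrow> valid_instance K q01 q10"
  unfolding alt_ok_def valid_instance_def by (metis less_eq_real_def)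

lemma arm_lower:
  assumes ug: "uniformly_good K pol" and ok: "alt_ok K i p01 p10 q01 q10"
    and Di: "mu_star K p01 p10 - mu p01 p10 i > 0"
    and best: "\<forall>j\<in>{1..K}. j \<noteq> i \<longrightarrow> mu q01 q10 j < mu q01 q10 i"
    and b: "0 < \<beta>" "\<beta> < 1" and d: "0 < \<delta>" "\<delta> < 1"
  defines "d0 \<equiv> xlogxy (p01 i) (q01 i) + xlogxy (1 - p01 i) (1 - q01 i)"
    and "d1 \<equiv> xlogxy (p10 i) (q10 i) + xlogxy (1 - p10 i) (1 - q10 i)"
    and "m \<equiv> p01 i / (p01 i + p10 i)"
  shows "eventually (\<lambda>n. ((1 - m) * d0 + m * d1) * EE (traj pol p01 p10 init n) (Nc i)
        + (\<bar>d0\<bar> + \<bar>d1 - d0\<bar> + \<bar>d1 - d0\<bar> * (2 / (p01 i + p10 i))) + 2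
        \<ge> (1 - \<delta>) * (1 - \<beta>) * ln (real n)) sequentially"
proof -
  have vi: "valid_instance K p01 p10" and iK: "i \<in> {1..K}" using ok by (auto simp: alt_ok_def)
  have vq: "valid_instance K q01 q10" by (rule alt_valid[OF ok])
  have pol: "is_policy K pol" using ug by (simp add: uniformly_good_def)
  have fp: "finpol pol" by (rule finpol_is_policy[OF pol])
  have K0: "K \<ge> 1" using iK by simp
  let ?ns = "next_state p01 p10 init" and ?ns' = "next_state q01 q10 init"
  have ac: "abscont ?ns ?ns'" by (rule abscont_alt[OF ok])
  have ev1: "eventually (\<lambda>n. EE (traj pol p01 p10 init n) (Nc i) \<le> (\<delta> / 2) * real n powr \<beta>) sequentially"
    by (rule EN_small[OF ug vi iK Di b(1)]) (use d in simp)
  have msq: "mu_star K q01 q10 = mu q01 q10 i"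
    using best iK by (intro mu_star_eq) (auto simp: less_imp_le)
  have ev2: "eventually (\<lambda>n. \<forall>j\<in>{1..K} - {i}. EE (traj pol q01 q10 init n) (Nc j) \<le> (1 / (2 * real K)) * real n powr \<beta>) sequentially"
  proof (rule eventually_ball_finite)
    show "finite ({1..K} - {i})" by simp
    show "\<forall>j\<in>{1..K} - {i}. eventually (\<lambda>n. EE (traj pol q01 q10 init n) (Nc j) \<le> (1 / (2 * real K)) * real n powr \<beta>) sequentially"
    proof
      fix j assume j: "j \<in> {1..K} - {i}"
      show "eventually (\<lambda>n. EE (traj pol q01 q10 init n) (Nc j) \<le> (1 / (2 * real K)) * real n powr \<beta>) sequentially"
      proof (rule EN_small[OF ug vq])
        show "j \<in> {1..K}" using j by simp
        show "mu_star K q01 q10 - mu q01 q10 j > 0" using j best msq by simp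
        show "0 < \<beta>" using b by simp
        show "0 < 1 / (2 * real K)" using K0 by simp
      qed
    qed
  qed
  have ev3: "eventually (\<lambda>n. n \<ge> 1) sequentially" by (rule eventually_ge_at_top)
  show ?thesis using ev1 ev2 ev3
  proof eventually_elim
    case (elim n)
    let ?P = "gtraj pol ?ns n" and ?P' = "gtraj pol ?ns' n"
    define A where "A h = (2 * Nc i h \<le> real n)" for h
    have fin: "finite (set_pmf ?P)" and fin': "finite (set_pmf ?P')" using fin_gtraj[OF fp] by auto
    have n1: "real n \<ge> 1" using elim by simp
    have pnb: "real n powr \<beta> \<le> real n" using powr_mono[of \<beta> 1 "real n"] n1 b by simp
    have "EE ?P (\<lambda>h. of_bool (\<not> A h)) \<le> EE ?P (\<lambda>h. (2 / real n) * Nc i h)"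
    proof (rule E_mono[OF fin])
      fix h show "of_bool (\<not> A h) \<le> (2 / real n) * Nc i h"
        using n1 Nc_nonneg[of i h] by (auto simp: A_def field_simps)
    qed
    also have "\<dots> = (2 / real n) * EE ?P (Nc i)" by simp
    also have "\<dots> \<le> (2 / real n) * ((\<delta> / 2) * real n)"
    proof -
      have "(\<delta> / 2) * real n powr \<beta> \<le> (\<delta> / 2) * real n" using pnb d by (intro mult_left_mono) auto
      then have "EE ?P (Nc i) \<le> (\<delta> / 2) * real n" using elim(1) unfolding traj_gtraj by linarith
      then show ?thesis using n1 by (intro mult_left_mono) auto
    qed
    also have "\<dots> = \<delta>" using n1 by simp
    finally have nA: "EE ?P (\<lambda>h. of_bool (\<not> A h)) \<le> \<delta>" .
    have "EE ?P (\<lambda>h. of_bool (A h)) + EE ?P (\<lambda>h. of_bool (\<not> A h)) = EE ?P (\<lambda>h. of_bool (A h) + of_bool (\<not> A h))"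
      by (simp add: E_add[OF fin])
    also have "\<dots> = 1" by (subst E_cong[where g="\<lambda>_. 1"]) auto
    finally have pA: "EE ?P (\<lambda>h. of_bool (A h)) \<ge> 1 - \<delta>" using nA by linarith
    have pApos: "EE ?P (\<lambda>h. of_bool (A h)) > 0" using pA d by linarith
    have "EE ?P' (\<lambda>h. of_bool (A h)) \<le> EE ?P' (\<lambda>h. (2 / real n) * (\<Sum>j\<in>{1..K} - {i}. Nc j h))"
    proof (rule E_mono[OF fin'])
      fix h assume h: "h \<in> set_pmf ?P'"
      have "real (length h) = (\<Sum>j\<in>{1..K}. Nc j h)" "length h = n"
        using supp_gtraj[OF pol h] decomp_pointwise[of h K] by auto
      then have "(\<Sum>j\<in>{1..K} - {i}. Nc j h) = real n - Nc i h"
        using iK by (simp add: sum_diff1)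
      moreover have "(\<Sum>j\<in>{1..K} - {i}. Nc j h) \<ge> 0" by (intro sum_nonneg Nc_nonneg)
      ultimately show "of_bool (A h) \<le> (2 / real n) * (\<Sum>j\<in>{1..K} - {i}. Nc j h)"
        using n1 Nc_nonneg[of i h] by (auto simp: A_def field_simps)
    qed
    also have "\<dots> = (2 / real n) * (\<Sum>j\<in>{1..K} - {i}. EE ?P' (Nc j))"
      by (simp add: E_sum[OF fin'])
    also have "\<dots> \<le> (2 / real n) * (\<Sum>j\<in>{1..K} - {i}. (1 / (2 * real K)) * real n powr \<beta>)"
      using elim(2) unfolding traj_gtraj by (intro mult_left_mono sum_mono) auto
    also have "\<dots> \<le> (2 / real n) * (real K * ((1 / (2 * real K)) * real n powr \<beta>))"
    proof -
      have "card ({1..K} - {i}) \<le> K" by (metis card_Diff1_le card_atLeastAtMost diff_Suc_1 finite_atLeastAtMost)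
      then have "real (card ({1..K} - {i})) * ((1 / (2 * real K)) * real n powr \<beta>) \<le> real K * ((1 / (2 * real K)) * real n powr \<beta>)"
        by (intro mult_right_mono) auto
      then show ?thesis using n1 by (intro mult_left_mono) auto
    qed
    also have "\<dots> = real n powr (\<beta> - 1)"
      using n1 K0 by (simp add: powr_diff field_simps)
    finally have pA': "EE ?P' (\<lambda>h. of_bool (A h)) \<le> real n powr (\<beta> - 1)" .
    have pA'pos: "EE ?P' (\<lambda>h. of_bool (A h)) > 0" by (rule event_bound(1)[OF fp ac pApos])
    have "ln (EE ?P' (\<lambda>h. of_bool (A h))) \<le> ln (real n powr (\<beta> - 1))"
      using pA' pA'pos by (metis ln_le_cancel_iff order_less_le_trans)
    also have "\<dots> = (\<beta> - 1) * ln (real n)" using n1 by (simp add: ln_powr)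
    finally have lnA: "- ln (EE ?P' (\<lambda>h. of_bool (A h))) \<ge> (1 - \<beta>) * ln (real n)" by (simp add: algebra_simps)
    have lnn: "ln (real n) \<ge> 0" using n1 by simp
    have "(1 - \<delta>) * ((1 - \<beta>) * ln (real n)) \<le> EE ?P (\<lambda>h. of_bool (A h)) * (- ln (EE ?P' (\<lambda>h. of_bool (A h))))"
      using pA lnA b d lnn by (intro mult_mono) auto
    also have "\<dots> - 2 \<le> EE ?P (addf (llr ?ns ?ns'))"
      using kl_lower[OF fp ac pApos] by simp
    also have "\<dots> \<le> ((1 - m) * d0 + m * d1) * EE (traj pol p01 p10 init n) (Nc i)
        + (\<bar>d0\<bar> + \<bar>d1 - d0\<bar> + \<bar>d1 - d0\<bar> * (2 / (p01 i + p10 i)))"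
      using EL_upper[OF pol ok, of init n] unfolding traj_gtraj d0_def d1_def m_def by simp
    finally show ?case by (simp add: algebra_simps)
  qed
qed



lemma ev_conclude:
  fixes EN :: "nat \<Rightarrow> real"
  assumes rI: "r * I < D * c" and D: "D > 0" and c: "c > 0" and EN: "\<And>n. EN n \<ge> 0"
    and ev: "eventually (\<lambda>n. I * EN n + C \<ge> c * ln (real n)) sequentially"
  shows "eventually (\<lambda>n. D * EN n \<ge> r * ln (real n)) sequentially"
proof -
  define M where "M = max (D * C / (D * c - r * I)) (C / c) + 1"
  have lim: "filterlim (\<lambda>n. ln (real n)) at_top sequentially" by real_asymp
  have evM: "eventually (\<lambda>n. ln (real n) \<ge> M) sequentially"
    using lim by (simp add: filterlim_at_top)
  show ?thesis using ev evM
  proof eventually_elim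
    case (elim n)
    let ?L = "ln (real n)"
    have g: "D * c - r * I > 0" using rI by simp
    have L1: "?L > C / c" using elim(2) unfolding M_def by linarith
    then have L1': "c * ?L > C" using c by (simp add: field_simps)
    show ?case
    proof (cases "I > 0")
      case True
      have "?L > D * C / (D * c - r * I)" using elim(2) unfolding M_def by linarith
      then have "(D * c - r * I) * ?L \<ge> D * C" using g by (simp add: field_simps)
      then have "I * (r * ?L) \<le> D * (c * ?L - C)" by (simp add: algebra_simps)
      also have "\<dots> \<le> D * (I * EN n)" using elim(1) D by (intro mult_left_mono) auto
      finally have "I * (r * ?L) \<le> I * (D * EN n)" by (simp add: algebra_simps)
      then show ?thesis using True by simp
    next
      case False
      then have "I * EN n \<le> 0" using EN[of n] by (simp add: mult_nonpos_nonneg)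
      then show ?thesis using elim(1) L1' by linarith
    qed
  qed
qed

lemma xlogxy_tendsto:
  assumes f: "(f \<longlongrightarrow> y) F" and y: "y > 0 \<or> x = 0"
  shows "((\<lambda>s. xlogxy x (f s)) \<longlongrightarrow> xlogxy x y) F"
proof (cases "x = 0")
  case True
  then show ?thesis by (simp add: xlogxy_def)
next
  case False
  then have y0: "y \<noteq> 0" using y by auto
  have "((\<lambda>s. x * ln (x / f s)) \<longlongrightarrow> x * ln (x / y)) F"
    using False y0 by (intro tendsto_intros f) auto
  then show ?thesis using False by (simp add: xlogxy_def)
qed

lemma bern_kl_not_minf: "bern_kl a b \<noteq> -\<infinity>"
  by (simp add: bern_kl_def)

lemma bern_kl_fin:
  assumes "bern_kl a b \<noteq> \<infinity>"
  shows "bern_kl a b = ereal (xlogxy a b + xlogxy (1 - a) (1 - b))" "\<not> ((b = 0 \<and> a \<noteq> 0) \<or> (b = 1 \<and> a \<noteq> 1))"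
  using assms by (auto simp: bern_kl_def split: if_splits)

lemma ereal_pos_mult_inf: "c > 0 \<Longrightarrow> ereal c * \<infinity> = \<infinity>"
  by simp

lemma kl_rate_finite:
  assumes "0 < p01 i" "0 < p10 i"
    and "kl_rate p01 p10 i j = ereal k"
  shows "bern_kl (p01 i) (p01 j) \<noteq> \<infinity>" "bern_kl (p10 i) (p10 j) \<noteq> \<infinity>"
    "k = pi0 p01 p10 i * (xlogxy (p01 i) (p01 j) + xlogxy (1 - p01 i) (1 - p01 j))
       + pi1 p01 p10 i * (xlogxy (p10 i) (p10 j) + xlogxy (1 - p10 i) (1 - p10 j))"
proof -
  have p0: "pi0 p01 p10 i > 0" "pi1 p01 p10 i > 0" using assms by (auto simp: pi0_def pi1_def)
  have nm1: "ereal (pi0 p01 p10 i) * bern_kl (p01 i) (p01 j) \<noteq> -\<infinity>"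
    using p0 bern_kl_not_minf[of "p01 i" "p01 j"] by (cases "bern_kl (p01 i) (p01 j)") auto
  have nm2: "ereal (pi1 p01 p10 i) * bern_kl (p10 i) (p10 j) \<noteq> -\<infinity>"
    using p0 bern_kl_not_minf[of "p10 i" "p10 j"] by (cases "bern_kl (p10 i) (p10 j)") auto
  show f1: "bern_kl (p01 i) (p01 j) \<noteq> \<infinity>"
  proof
    assume "bern_kl (p01 i) (p01 j) = \<infinity>"
    then have "kl_rate p01 p10 i j = \<infinity>" using p0 nm2 unfolding kl_rate_def by simp
    then show False using assms by simp
  qed
  show f2: "bern_kl (p10 i) (p10 j) \<noteq> \<infinity>"
  proof
    assume "bern_kl (p10 i) (p10 j) = \<infinity>"
    then have "kl_rate p01 p10 i j = \<infinity>" using p0 nm1 unfolding kl_rate_def by simp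
    then show False using assms by simp
  qed
  show "k = pi0 p01 p10 i * (xlogxy (p01 i) (p01 j) + xlogxy (1 - p01 i) (1 - p01 j))
       + pi1 p01 p10 i * (xlogxy (p10 i) (p10 j) + xlogxy (1 - p10 i) (1 - p10 j))"
    using assms(3) unfolding kl_rate_def bern_kl_fin(1)[OF f1] bern_kl_fin(1)[OF f2] by simp
qed



lemma I_tendsto:
  assumes vi: "valid_instance K p01 p10" and iK: "i \<in> {1..K}" and oK: "1 \<in> {1..K}"
    and kl: "kl_rate p01 p10 i 1 = ereal k"
  shows "((\<lambda>s. (1 - p01 i / (p01 i + p10 i)) *
      (xlogxy (p01 i) (p01 1 * (1 - s)) + xlogxy (1 - p01 i) (1 - p01 1 * (1 - s)))
     + p01 i / (p01 i + p10 i) *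
      (xlogxy (p10 i) (p10 1 * (1 - s)^2) + xlogxy (1 - p10 i) (1 - p10 1 * (1 - s)^2))) \<longlongrightarrow> k) (at_right 0)"
proof -
  have v: "0 < p01 i" "p01 i \<le> 1" "0 < p10 i" "p10 i \<le> 1" "0 < p01 1" "p01 1 \<le> 1" "0 < p10 1" "p10 1 \<le> 1"
    using vi iK oK unfolding valid_instance_def by auto
  note f = kl_rate_finite[OF v(1) v(3) kl]
  have c1: "\<not> ((p01 1 = 0 \<and> p01 i \<noteq> 0) \<or> (p01 1 = 1 \<and> p01 i \<noteq> 1))" by (rule bern_kl_fin(2)[OF f(1)])
  have c2: "\<not> ((p10 1 = 0 \<and> p10 i \<noteq> 0) \<or> (p10 1 = 1 \<and> p10 i \<noteq> 1))" by (rule bern_kl_fin(2)[OF f(2)])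
  have pi0: "pi0 p01 p10 i = 1 - p01 i / (p01 i + p10 i)" using v by (simp add: pi0_def field_simps)
  have pi1: "pi1 p01 p10 i = p01 i / (p01 i + p10 i)" by (simp add: pi1_def)
  have l1: "((\<lambda>s. p01 1 * (1 - s)) \<longlongrightarrow> p01 1) (at_right (0::real))"
    by (rule tendsto_eq_intros) (rule tendsto_intros | simp)+
  have l2: "((\<lambda>s. p10 1 * (1 - s)^2) \<longlongrightarrow> p10 1) (at_right (0::real))"
    by (rule tendsto_eq_intros) (rule tendsto_intros | simp)+
  have l1': "((\<lambda>s. 1 - p01 1 * (1 - s)) \<longlongrightarrow> 1 - p01 1) (at_right (0::real))"
    by (intro tendsto_intros l1)
  have l2': "((\<lambda>s. 1 - p10 1 * (1 - s)^2) \<longlongrightarrow> 1 - p10 1) (at_right (0::real))"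
    by (intro tendsto_intros l2)
  have t1: "((\<lambda>s. xlogxy (p01 i) (p01 1 * (1 - s))) \<longlongrightarrow> xlogxy (p01 i) (p01 1)) (at_right 0)"
    using v by (intro xlogxy_tendsto l1) auto
  have t2: "((\<lambda>s. xlogxy (1 - p01 i) (1 - p01 1 * (1 - s))) \<longlongrightarrow> xlogxy (1 - p01 i) (1 - p01 1)) (at_right 0)"
    using v c1 by (intro xlogxy_tendsto l1') auto
  have t3: "((\<lambda>s. xlogxy (p10 i) (p10 1 * (1 - s)^2)) \<longlongrightarrow> xlogxy (p10 i) (p10 1)) (at_right 0)"
    using v by (intro xlogxy_tendsto l2) auto
  have t4: "((\<lambda>s. xlogxy (1 - p10 i) (1 - p10 1 * (1 - s)^2)) \<longlongrightarrow> xlogxy (1 - p10 i) (1 - p10 1)) (at_right 0)"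
    using v c2 by (intro xlogxy_tendsto l2') auto
  show ?thesis
    unfolding f(3) pi0 pi1 by (intro tendsto_intros t1 t2 t3 t4)
qed

lemma ereal_zero_div: "ereal 0 / x = 0"
  by (cases x) (auto simp: divide_ereal_def)

lemma kl_rate_not_minf:
  assumes "0 < p01 i" "0 < p10 i"
  shows "kl_rate p01 p10 i j \<noteq> -\<infinity>"
proof -
  have p0: "pi0 p01 p10 i > 0" "pi1 p01 p10 i > 0" using assms by (auto simp: pi0_def pi1_def)
  have nm1: "ereal (pi0 p01 p10 i) * bern_kl (p01 i) (p01 j) \<noteq> -\<infinity>"
    using p0 bern_kl_not_minf[of "p01 i" "p01 j"] by (cases "bern_kl (p01 i) (p01 j)") auto
  have nm2: "ereal (pi1 p01 p10 i) * bern_kl (p10 i) (p10 j) \<noteq> -\<infinity>"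
    using p0 bern_kl_not_minf[of "p10 i" "p10 j"] by (cases "bern_kl (p10 i) (p10 j)") auto
  show ?thesis using nm1 nm2 unfolding kl_rate_def by simp
qed



lemma arm_final:
  assumes ug: "uniformly_good K pol" and vi: "valid_instance K p01 p10"
    and iK: "i \<in> {2..K}" and best1: "\<forall>j\<in>{1..K}. mu p01 p10 j \<le> mu p01 p10 1"
    and r: "ereal r < ereal (mu p01 p10 1 - mu p01 p10 i) / kl_rate p01 p10 i 1"
  shows "eventually (\<lambda>n. (mu p01 p10 1 - mu p01 p10 i) * EE (traj pol p01 p10 init n) (Nc i) \<ge> r * ln (real n)) sequentially"
proof -
  define D where "D = mu p01 p10 1 - mu p01 p10 i"
  have r': "ereal r < ereal D / kl_rate p01 p10 i 1" using r unfolding D_def .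
  have pol: "is_policy K pol" using ug by (simp add: uniformly_good_def)
  have iK1: "i \<in> {1..K}" and oK: "1 \<in> {1..K}" and i1: "i \<noteq> 1" using iK by auto
  have D0: "D \<ge> 0" using best1 iK1 by (simp add: D_def)
  have v: "0 < p01 i" "p01 i \<le> 1" "0 < p10 i" "p10 i \<le> 1" "0 < p01 1" "p01 1 \<le> 1" "0 < p10 1" "p10 1 \<le> 1"
    using vi iK1 oK unfolding valid_instance_def by auto
  have EN0: "\<And>n. EE (traj pol p01 p10 init n) (Nc i) \<ge> 0" by (rule EN_nonneg[OF pol])
  show ?thesis
  proof (cases "r \<le> 0")
    case True
    have "eventually (\<lambda>n. n \<ge> 1) sequentially" by (rule eventually_ge_at_top)
    then show ?thesis
    proof eventually_elim
      case (elim n)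
      have "r * ln (real n) \<le> 0" using True elim by (simp add: mult_nonpos_nonneg)
      also have "0 \<le> D * EE (traj pol p01 p10 init n) (Nc i)" using D0 EN0 by simp
      finally show ?case by (simp add: D_def)
    qed
  next
    case False
    then have rpos: "r > 0" by simp
    have Dpos: "D > 0"
    proof (rule ccontr)
      assume "\<not> D > 0"
      then have "D = 0" using D0 by simp
      then show False using r' rpos by (simp add: ereal_zero_div)
    qed
    obtain k where kl: "kl_rate p01 p10 i 1 = ereal k" and rk: "r * k < D"
    proof (cases "kl_rate p01 p10 i 1")
      case (real k)
      have "r * k < D"
      proof (cases "k = 0")
        case True then show ?thesis using rpos Dpos by simp
      next
        case False
        then have "ereal r < ereal (D / k)" using r' real by (simp add: divide_ereal_def divide_inverse)
        then have rk: "r < D / k" by simp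
        show ?thesis
        proof (cases "k > 0")
          case True then show ?thesis using rk by (simp add: field_simps)
        next
          case False
          then have "k < 0" using \<open>k \<noteq> 0\<close> by simp
          then have "D / k \<le> 0" using Dpos divide_pos_neg[of D k] by simp
          then show ?thesis using rk rpos by linarith
        qed
      qed
      then show ?thesis using real that by blast
    next
      case PInf
      then show ?thesis using r' rpos by (simp add: divide_ereal_def)
    next
      case MInf
      then show ?thesis using kl_rate_not_minf[where ?p01.0=p01 and ?p10.0=p10 and i=i and j=1, OF v(1) v(3)] by simp
    qed
    define m where "m = p01 i / (p01 i + p10 i)"
    define Is where "Is s = (1 - m) * (xlogxy (p01 i) (p01 1 * (1 - s)) + xlogxy (1 - p01 i) (1 - p01 1 * (1 - s)))
     + m * (xlogxy (p10 i) (p10 1 * (1 - s)^2) + xlogxy (1 - p10 i) (1 - p10 1 * (1 - s)^2))" for s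
    have lim: "(Is \<longlongrightarrow> k) (at_right 0)"
      unfolding Is_def m_def by (rule I_tendsto[OF vi iK1 oK kl])
    define B where "B = k + (D - r * k) / (2 * r)"
    have kB: "k < B" using rk rpos by (simp add: B_def)
    have "eventually (\<lambda>s. Is s < B) (at_right 0)"
      using order_tendstoD(2)[OF lim kB] .
    moreover have "eventually (\<lambda>s. s < (1::real)) (at_right 0)"
      unfolding eventually_at_right_field by (intro exI[of _ 1]) auto
    moreover have "eventually (\<lambda>s. s > (0::real)) (at_right 0)"
      by (rule eventually_at_right_less)
    ultimately have "eventually (\<lambda>s. Is s < B \<and> s < 1 \<and> s > 0) (at_right (0::real))"
      by eventually_elim auto
    then obtain s where s: "Is s < B" "s < 1" "s > 0"
      using eventually_happens'[OF trivial_limit_at_right_real] by blast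
    define q01 where "q01 = p01(i := p01 1 * (1 - s))"
    define q10 where "q10 = p10(i := p10 1 * (1 - s)^2)"
    have s1: "0 < 1 - s" "1 - s < 1" using s by auto
    have s2: "0 < (1 - s)^2" "(1 - s)^2 < 1"
    proof -
      show "0 < (1 - s)^2" using s1 by simp
      have "(1 - s) * (1 - s) < 1 * 1" using s1 by (intro mult_strict_mono) auto
      then show "(1 - s)^2 < 1" by (simp add: power2_eq_square)
    qed
    have lt1: "a * t < 1" if "0 < a" "a \<le> 1" "0 < t" "t < 1" for a t :: real
    proof -
      have "a * t \<le> 1 * t" using that by (intro mult_right_mono) auto
      then show ?thesis using that by linarith
    qed
    have ok: "alt_ok K i p01 p10 q01 q10"
      unfolding alt_ok_def q01_def q10_def using vi iK1 v s1 s2 lt1[of "p01 1" "1 - s"] lt1[of "p10 1" "(1 - s)^2"]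
      by auto
    have muq: "mu q01 q10 j = mu p01 p10 j" if "j \<noteq> i" for j
      using that by (simp add: mu_eq q01_def q10_def)
    have "mu q01 q10 i = p01 1 * (1 - s) / (p01 1 * (1 - s) + p10 1 * (1 - s)^2)"
      by (simp add: mu_eq q01_def q10_def)
    also have "\<dots> = p01 1 / (p01 1 + p10 1 * (1 - s))"
    proof -
      have "p01 1 * (1 - s) + p10 1 * (1 - s)^2 = (1 - s) * (p01 1 + p10 1 * (1 - s))"
        by (simp add: power2_eq_square algebra_simps)
      then show ?thesis using s1 by simp
    qed
    also have "\<dots> > p01 1 / (p01 1 + p10 1)"
    proof (rule divide_strict_left_mono)
      show "p01 1 + p10 1 * (1 - s) < p01 1 + p10 1" using v s1 by simp
      show "0 < p01 1" using v by simp
      have "0 \<le> p10 1 * (1 - s)" using v s1 by simp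
      then show "0 < (p01 1 + p10 1) * (p01 1 + p10 1 * (1 - s))" using v by (intro mult_pos_pos) auto
    qed
    finally have muqi: "mu q01 q10 i > mu p01 p10 1" by (simp add: mu_eq)
    have best: "\<forall>j\<in>{1..K}. j \<noteq> i \<longrightarrow> mu q01 q10 j < mu q01 q10 i"
      using muq best1 muqi by (metis le_less_trans)
    have ms: "mu_star K p01 p10 = mu p01 p10 1" by (rule mu_star_eq[OF oK best1])
    have Di: "mu_star K p01 p10 - mu p01 p10 i > 0" using ms Dpos by (simp add: D_def)
    define \<eta> where "\<eta> = (1 - r * k / D) / 4"
    have rkD: "r * k / D < 1" using rk Dpos by (simp add: field_simps)
    have rk0: "r * k / D \<ge> 0"
    proof (cases "k = 0")
      case False
      then have "ereal r < ereal (D / k)" using r' kl by (simp add: divide_ereal_def divide_inverse)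
      then have "D / k > 0" using rpos by simp
      then have "k > 0" using Dpos by (simp add: zero_less_divide_iff)
      then show ?thesis using rpos Dpos by simp
    qed simp
    have eta: "0 < \<eta>" "\<eta> < 1" using rkD rk0 by (auto simp: \<eta>_def)
    define d0 where "d0 = xlogxy (p01 i) (q01 i) + xlogxy (1 - p01 i) (1 - q01 i)"
    define d1 where "d1 = xlogxy (p10 i) (q10 i) + xlogxy (1 - p10 i) (1 - q10 i)"
    define C where "C = (\<bar>d0\<bar> + \<bar>d1 - d0\<bar> + \<bar>d1 - d0\<bar> * (2 / (p01 i + p10 i))) + 2"
    have Is_eq: "Is s = (1 - m) * d0 + m * d1"
      by (simp add: Is_def d0_def d1_def q01_def q10_def)
    have ev: "eventually (\<lambda>n. Is s * EE (traj pol p01 p10 init n) (Nc i) + C \<ge> ((1 - \<eta>) * (1 - \<eta>)) * ln (real n)) sequentially"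
      using arm_lower[OF ug ok Di best eta eta, of init] unfolding Is_eq C_def d0_def d1_def m_def
      by (simp add: algebra_simps)
    have key: "r * Is s < D * ((1 - \<eta>) * (1 - \<eta>))"
    proof -
      have "r * Is s < r * B" using s(1) rpos by simp
      also have "r * B = D / 2 + r * k / 2" unfolding B_def using rpos by (simp add: field_simps)
      also have "\<dots> = D * (1 - 2 * \<eta>)" unfolding \<eta>_def using Dpos by (simp add: field_simps)
      also have "\<dots> \<le> D * ((1 - \<eta>) * (1 - \<eta>))"
        using Dpos by (intro mult_left_mono) (auto simp: algebra_simps)
      finally show ?thesis .
    qed
    have "eventually (\<lambda>n. D * EE (traj pol p01 p10 init n) (Nc i) \<ge> r * ln (real n)) sequentially"
      by (rule ev_conclude[OF key Dpos _ EN0 ev]) (use eta in simp)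
    then show ?thesis by (simp add: D_def)
  qed
qed



lemma ereal_split:
  assumes "ereal y < a + b" "a \<noteq> -\<infinity>" "b \<noteq> -\<infinity>"
  shows "\<exists>y1 y2. ereal y1 < a \<and> ereal y2 < b \<and> y = y1 + y2"
proof (cases a)
  case (real t)
  show ?thesis
  proof (cases b)
    case (real u)
    then have "y < t + u" using assms \<open>a = ereal t\<close> by simp
    then show ?thesis using \<open>a = ereal t\<close> real
      by (intro exI[of _ "t - (t + u - y) / 2"] exI[of _ "u - (t + u - y) / 2"]) auto
  next
    case PInf
    then show ?thesis using \<open>a = ereal t\<close> by (intro exI[of _ "t - 1"] exI[of _ "y - (t - 1)"]) auto
  next
    case MInf
    then show ?thesis using assms by simp
  qed
next
  case PInf
  show ?thesis
  proof (cases b)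
    case (real u)
    then show ?thesis using PInf by (intro exI[of _ "y - (u - 1)"] exI[of _ "u - 1"]) auto
  next
    case PInf
    then show ?thesis using \<open>a = \<infinity>\<close> by (intro exI[of _ "y"] exI[of _ "0"]) auto
  next
    case MInf
    then show ?thesis using assms by simp
  qed
next
  case MInf
  then show ?thesis using assms by simp
qed

lemma sum_not_minf: "finite A \<Longrightarrow> (\<forall>i\<in>A. (T i :: ereal) \<noteq> -\<infinity>) \<Longrightarrow> (\<Sum>i\<in>A. T i) \<noteq> -\<infinity>"
  by (induction A rule: finite_induct) auto

lemma sum_split:
  assumes "finite A"
  shows "(\<forall>i\<in>A. T i \<noteq> -\<infinity>) \<Longrightarrow> ereal y < (\<Sum>i\<in>A. T i) \<Longrightarrow> \<exists>r. (\<forall>i\<in>A. ereal (r i) < T i) \<and> y < (\<Sum>i\<in>A. r i)"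
  using assms
proof (induction A arbitrary: y rule: finite_induct)
  case empty
  then show ?case by (intro exI[of _ "\<lambda>_. 0"]) simp
next
  case (insert a F)
  have nm: "(\<Sum>i\<in>F. T i) \<noteq> -\<infinity>" using insert.prems(1) insert.hyps(1) by (intro sum_not_minf) auto
  have "ereal y < T a + (\<Sum>i\<in>F. T i)" using insert by simp
  then obtain y1 y2 where y: "ereal y1 < T a" "ereal y2 < (\<Sum>i\<in>F. T i)" "y = y1 + y2"
    using ereal_split nm insert.prems(1) by blast
  obtain r where r: "\<forall>i\<in>F. ereal (r i) < T i" "y2 < (\<Sum>i\<in>F. r i)"
    using insert.IH[OF _ y(2)] insert.prems(1) insert.hyps by auto
  define r' where "r' = r(a := y1)"
  have "(\<Sum>i\<in>F. r' i) = (\<Sum>i\<in>F. r i)" unfolding r'_def using insert.hyps by (intro sum.cong) auto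
  then have "y < (\<Sum>i\<in>insert a F. r' i)" using insert.hyps y r by (simp add: r'_def)
  moreover have "\<forall>i\<in>insert a F. ereal (r' i) < T i" using r y insert.hyps by (auto simp: r'_def)
  ultimately show ?case by blast
qed

theorem theorem3:
  fixes K :: nat and p01 p10 :: "nat \<Rightarrow> real" and init :: "nat \<Rightarrow> bool" and pol :: policy
  assumes "K \<ge> 1"
    and "valid_instance K p01 p10"
    and "\<forall>j\<in>{1..K}. mu p01 p10 j \<le> mu p01 p10 1"
    and "uniformly_good K pol"
  shows "liminf (\<lambda>n. ereal (regret K pol p01 p10 init n / ln (real n)))
           \<ge> (\<Sum>i\<in>{2..K}. ereal (mu p01 p10 1 - mu p01 p10 i) / kl_rate p01 p10 i 1)"
proof -
  note K1 = assms(1) and vi = assms(2) and best1 = assms(3) and ug = assms(4)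
  let ?T = "\<lambda>i. ereal (mu p01 p10 1 - mu p01 p10 i) / kl_rate p01 p10 i 1"
  let ?EN = "\<lambda>i n. EE (traj pol p01 p10 init n) (Nc i)"
  have pol: "is_policy K pol" using ug by (simp add: uniformly_good_def)
  have oK: "1 \<in> {1..K}" using K1 by simp
  have ms: "mu_star K p01 p10 = mu p01 p10 1" by (rule mu_star_eq[OF oK best1])
  have Tnm: "\<forall>i\<in>{2..K}. ?T i \<noteq> -\<infinity>"
  proof
    fix i assume i: "i \<in> {2..K}"
    have D0: "mu p01 p10 1 - mu p01 p10 i \<ge> 0" using best1 i by auto
    show "?T i \<noteq> -\<infinity>"
      using D0 by (cases "kl_rate p01 p10 i 1") (auto simp: divide_ereal_def)
  qed
  show ?thesis
    unfolding le_Liminf_iff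
  proof (intro allI impI)
    fix y :: ereal
    assume y: "y < (\<Sum>i\<in>{2..K}. ?T i)"
    show "eventually (\<lambda>n. y < ereal (regret K pol p01 p10 init n / ln (real n))) sequentially"
    proof (cases y)
      case MInf
      then show ?thesis by simp
    next
      case PInf
      then show ?thesis using y by simp
    next
      case (real y0)
      obtain r where r: "\<forall>i\<in>{2..K}. ereal (r i) < ?T i" "y0 < (\<Sum>i\<in>{2..K}. r i)"
        using sum_split[of "{2..K}" ?T y0] Tnm y real by auto
      define R where "R = (\<Sum>i\<in>{2..K}. r i)"
      define C where "C = (\<Sum>a\<in>{1..K}. 2 / (p01 a + p10 a))"
      have ev1: "eventually (\<lambda>n. \<forall>i\<in>{2..K}. (mu p01 p10 1 - mu p01 p10 i) * ?EN i n \<ge> r i * ln (real n)) sequentially"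
      proof (intro eventually_ball_finite ballI)
        fix i assume i: "i \<in> {2..K}"
        show "eventually (\<lambda>n. (mu p01 p10 1 - mu p01 p10 i) * ?EN i n \<ge> r i * ln (real n)) sequentially"
          by (rule arm_final[OF ug vi i best1]) (use r(1) i in blast)
      qed simp
      have lim: "filterlim (\<lambda>n. ln (real n)) at_top sequentially" by real_asymp
      have ev2: "eventually (\<lambda>n. ln (real n) \<ge> (C + 1) / (R - y0) + 1) sequentially"
        using lim by (simp add: filterlim_at_top)
      show ?thesis using ev1 ev2
      proof eventually_elim
        case (elim n)
        let ?L = "ln (real n)"
        have Ry: "R - y0 > 0" using r(2) by (simp add: R_def)
        have C0: "C \<ge> 0" unfolding C_def
        proof (intro sum_nonneg)
          fix a assume a: "a \<in> {1..K}"
          then have "0 < p01 a" "0 < p10 a" using vi unfolding valid_instance_def by auto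
          then show "0 \<le> 2 / (p01 a + p10 a)" by simp
        qed
        have Lpos: "?L > 0" using elim(2) Ry C0 by (smt (verit) divide_nonneg_pos)
        have "(C + 1) / (R - y0) < ?L" using elim(2) by linarith
        then have CL: "C < (R - y0) * ?L" using Ry by (simp add: field_simps)
        have "R * ?L = (\<Sum>i\<in>{2..K}. r i * ?L)" by (simp add: R_def sum_distrib_right)
        also have "\<dots> \<le> (\<Sum>i\<in>{2..K}. (mu p01 p10 1 - mu p01 p10 i) * ?EN i n)"
          using elim(1) by (intro sum_mono) auto
        also have "\<dots> \<le> (\<Sum>a\<in>{1..K}. (mu_star K p01 p10 - mu p01 p10 a) * ?EN a n)"
        proof -
          have "(\<Sum>a\<in>{1..K}. (mu_star K p01 p10 - mu p01 p10 a) * ?EN a n) =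
                (\<Sum>a\<in>{2..K}. (mu_star K p01 p10 - mu p01 p10 a) * ?EN a n) + (\<Sum>a\<in>{1..K} - {2..K}. (mu_star K p01 p10 - mu p01 p10 a) * ?EN a n)"
            by (subst sum.subset_diff[of "{2..K}"]) auto
          moreover have "(\<Sum>a\<in>{1..K} - {2..K}. (mu_star K p01 p10 - mu p01 p10 a) * ?EN a n) \<ge> 0"
            using best1 ms by (intro sum_nonneg mult_nonneg_nonneg EN_nonneg[OF pol]) auto
          ultimately show ?thesis using ms by simp
        qed
        also have "\<dots> \<le> regret K pol p01 p10 init n + C"
          using regret_decomp[OF pol vi, of init n] unfolding C_def by linarith
        finally have "R * ?L \<le> regret K pol p01 p10 init n + C" .
        then have "y0 * ?L < regret K pol p01 p10 init n" using CL by (simp add: algebra_simps)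
        then have "y0 < regret K pol p01 p10 init n / ?L" using Lpos by (simp add: field_simps)
        then show ?case using real by simp
      qed
    qed
  qed
qed

end
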